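(* With $k(c)$ as defined below, $k(c)\sim \dfrac{\log |c+2|^{-1}}{\log 4}$ as $c\to -2$, $c<-2$ (i.e. the ratio of the two sides tends to $1$).
   Context: For real $c<-2$ let $f_c(z)=z^2+c$ and $r_n(c)=f_c^{\circ n}(0)$, so $r_1(c)=c$ and $r_{n+1}(c)=r_n(c)^2+c$. For $-3<c<-2$, $k(c)$ denotes the smallest positive integer $k$ such that $r_{k+1}(c)/r_k(c)\ge 36$. *)

theory Defs
  imports "HOL-Analysis.Analysis"
begin

fun r :: "nat \<Rightarrow> real \<Rightarrow> real" where
  "r 0 c = 0"
| "r (Suc n) c = (r n c)^2 + c"

definition kk :: "real \<Rightarrow> nat" where
  "kk c = (LEAST k. 0 < k \<and> r (Suc k) c / r k c \<ge> 36)"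

end

theory Submission imports Defs "HOL-Real_Asymp.Real_Asymp" begin

lemma beta_props:
  fixes c :: real
  assumes "c < -2"
  defines "b \<equiv> (1 + sqrt (1 - 4*c)) / 2"
  shows "b^2 = b - c" "2 < b" "b \<le> 2 + (-2-c)/3"
proof -
  have s: "(sqrt (1 - 4*c))^2 = 1 - 4*c" using assms by simp
  show "b^2 = b - c" unfolding b_def using s by (simp add: power2_eq_square field_simps)
  have "sqrt 9 < sqrt (1-4*c)" using assms by (subst real_sqrt_less_iff) linarith
  then have "3 < sqrt (1-4*c)" by simp
  then show "2 < b" unfolding b_def by simp
  have "sqrt (1-4*c) \<le> 3 + 2*(-2-c)/3"
  proof (rule real_le_lsqrt)
    have "(3 + 2*(-2-c)/3)^2 = 1 - 4*c + (2*(-2-c)/3)^2" by (simp add: power2_eq_square algebra_simps)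
    then show "1 - 4*c \<le> (3 + 2*(-2-c)/3)^2" by (smt (verit) zero_le_power2)
  qed (use assms in auto)
  then show "b \<le> 2 + (-2-c)/3" unfolding b_def by (simp add: field_simps)
qed

lemma r_step_diff:
  fixes c b :: real
  assumes "b^2 = b - c"
  shows "r (Suc n) c - b = (r n c - b) * (r n c - b + 2*b)"
  using assms by (simp add: power2_eq_square algebra_simps)

lemma r2: "r 2 c = c^2 + c" by (simp add: numeral_2_eq_2)
lemma r1: "r 1 c = c" by simp

lemma d_lower:
  fixes c :: real
  assumes "c < -2" "b^2 = b - c" "2 < b" "r 2 c - b \<ge> 2*(-2-c)" "2 \<le> n"
  shows "r n c - b \<ge> 4^(n-2) * (2*(-2-c))"
  using assms(5)
proof (induction n rule: dec_induct)
  case base then show ?case using assms by simp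
next
  case (step n)
  have e: "0 < 2*(-2-c)" using assms by simp
  have "0 < (4::real)^(n-2) * (2*(-2-c))" using e by simp
  then have d0: "r n c - b > 0" using step.IH by linarith
  have "r (Suc n) c - b = (r n c - b) * (r n c - b + 2*b)" using r_step_diff[OF assms(2)] .
  also have "\<dots> \<ge> (r n c - b) * 4" using d0 assms(3) by (intro mult_left_mono) auto
  finally have "r (Suc n) c - b \<ge> 4 * (r n c - b)" by simp
  moreover have "4 * (r n c - b) \<ge> 4 * (4^(n-2) * (2*(-2-c)))" using step.IH by simp
  moreover have "4^(Suc n - 2) = 4 * (4::real)^(n-2)" using step.hyps
    by (metis Suc_diff_le power_Suc)
  ultimately show ?case by simp
qed

lemma d_upper:
  fixes c b q dl :: real
  assumes "b^2 = b - c" "b \<le> 2 + (-2-c)/3" "r 2 c - b \<le> 4*(-2-c)" "c < -2"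
    "q = 4 + (-2-c) + dl" "0 < dl" "\<And>m. 2 \<le> m \<Longrightarrow> r m c - b \<ge> 0"
    "2 \<le> n" "4*(-2-c)*q^(n-2) \<le> dl"
  shows "r n c - b \<le> 4*(-2-c)*q^(n-2)"
  using assms(8,9)
proof (induction n rule: dec_induct)
  case base then show ?case using assms by simp
next
  case (step n)
  have q1: "q \<ge> 1" using assms by simp
  have "(4::real)*(-2-c)*q^(n-2) \<le> 4*(-2-c)*q^(Suc n-2)"
    using q1 assms(4) by (intro mult_left_mono power_increasing) auto
  with step.prems have h: "4*(-2-c)*q^(n-2) \<le> dl" by linarith
  have IH: "r n c - b \<le> 4*(-2-c)*q^(n-2)" using step.IH h by blast
  have d0: "r n c - b \<ge> 0" using assms(7) step.hyps by blast
  have qq: "r n c - b + 2*b \<le> q" using IH h assms(2,4,5) by (simp add: field_simps)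
  have "r (Suc n) c - b = (r n c - b) * (r n c - b + 2*b)" using r_step_diff[OF assms(1)] .
  also have "\<dots> \<le> (r n c - b) * q" using d0 qq by (intro mult_left_mono) auto
  also have "\<dots> \<le> 4*(-2-c)*q^(n-2) * q" using IH q1 by (intro mult_right_mono) auto
  also have "\<dots> = 4*(-2-c)*q^(Suc n-2)"
  proof -
    have "q^(Suc n - 2) = q^(n-2)*q" using step.hyps by (metis Suc_diff_le power_Suc mult.commute)
    then show ?thesis by simp
  qed
  finally show ?case .
qed

lemma kk_bounds:
  fixes c :: real
  assumes c3: "-3 < c" and c2: "c < -2"
  defines "e \<equiv> -2 - c"
  shows "real (kk c) \<le> 3 + ln (20/e) / ln 4"
    and "\<And>dl. 0 < dl \<Longrightarrow> 4*e \<le> dl \<Longrightarrow> dl \<le> 1 \<Longrightarrow>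
           real (kk c) \<ge> 1 + ln (dl/(4*e)) / ln (4 + e + dl)"
proof -
  define b where "b = (1 + sqrt (1 - 4*c)) / 2"
  have bp: "b^2 = b - c" "2 < b" "b \<le> 2 + e/3" using beta_props[OF c2] unfolding b_def e_def by auto
  have e0: "0 < e" "e < 1" using assms unfolding e_def by auto
  have cc: "c = -2 - e" unfolding e_def by simp
  have d2eq: "r 2 c - b = 3*e + e^2 - (b - 2)" unfolding r2 cc by (simp add: power2_eq_square algebra_simps)
  have d2l: "r 2 c - b \<ge> 2*(-2-c)"
  proof -
    have "3*b \<le> 6 + e" using bp(3) by (simp add: field_simps)
    then show ?thesis using d2eq e0 zero_le_power2[of e] unfolding e_def[symmetric] by linarith
  qed
  have d2u: "r 2 c - b \<le> 4*(-2-c)"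
  proof -
    have "e^2 \<le> e" using e0 by (simp add: power2_eq_square)
    then show ?thesis using d2eq bp e0 unfolding e_def[symmetric] by simp
  qed
  have dlow: "\<And>n. 2 \<le> n \<Longrightarrow> r n c - b \<ge> 4^(n-2) * (2*e)"
    using d_lower[OF c2 bp(1,2) d2l] unfolding e_def by blast
  have dpos: "\<And>n. 2 \<le> n \<Longrightarrow> r n c - b \<ge> 0"
  proof -
    fix n :: nat assume "2 \<le> n"
    moreover have "0 \<le> (4::real)^(n-2) * (2*e)" using e0 by simp
    ultimately show "r n c - b \<ge> 0" using dlow by (meson order_trans)
  qed
  have rpos: "\<And>n. 2 \<le> n \<Longrightarrow> r n c > 2" using dpos bp(2) by (smt (verit))
  have ratio: "\<And>n. 2 \<le> n \<Longrightarrow> r (Suc n) c / r n c = r n c + c / r n c"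
  proof -
    fix n :: nat assume "2 \<le> n"
    then have "r n c \<noteq> 0" using rpos by (smt (verit))
    then show "r (Suc n) c / r n c = r n c + c / r n c" by (simp add: power2_eq_square field_simps)
  qed
  have ratio_le: "\<And>n. 2 \<le> n \<Longrightarrow> r (Suc n) c / r n c \<le> r n c"
  proof -
    fix n :: nat assume n: "2 \<le> n"
    have "c / r n c \<le> 0" using rpos[OF n] c2 by (simp add: divide_nonpos_pos)
    then show "r (Suc n) c / r n c \<le> r n c" using ratio[OF n] by simp
  qed
  have ratio_ge: "\<And>n. 2 \<le> n \<Longrightarrow> r (Suc n) c / r n c \<ge> r n c - 3/2"
  proof -
    fix n :: nat assume n: "2 \<le> n"
    have "c \<ge> -3/2 * r n c" using rpos[OF n] c3 by simp
    then have "c / r n c \<ge> -3/2" using rpos[OF n] by (simp add: field_simps)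
    then show "r (Suc n) c / r n c \<ge> r n c - 3/2" using ratio[OF n] by simp
  qed
  have ratio1: "r 2 c / r 1 c < 36"
  proof -
    have "r 2 c / r 1 c = c + 1" using c2 unfolding r2 r1 by (simp add: power2_eq_square field_simps)
    then show ?thesis using c2 by simp
  qed
  define P where "P k \<longleftrightarrow> 0 < k \<and> r (Suc k) c / r k c \<ge> 36" for k
  have kk_eq: "kk c = (LEAST k. P k)" unfolding kk_def P_def ..
  define x where "x = ln (20/e) / ln 4"
  have x0: "x > 0" unfolding x_def using e0 by (simp add: field_simps)
  define N where "N = 2 + nat \<lceil>x\<rceil>"
  have pw: "(4::real)^(N-2) \<ge> 20/e"
  proof -
    have "(4::real)^(N-2) = 4 powr (real (nat \<lceil>x\<rceil>))" unfolding N_def by (simp add: powr_realpow)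
    also have "\<dots> \<ge> 4 powr x" using x0 by (intro powr_mono) auto
    moreover have "(4::real) powr x = 20/e" unfolding x_def log_def[symmetric] using e0 by simp
    ultimately show ?thesis by simp
  qed
  have PN: "P N"
  proof -
    have N2: "2 \<le> N" unfolding N_def by simp
    have "r N c - b \<ge> 40"
    proof -
      have "(4::real)^(N-2) * (2*e) \<ge> 20/e * (2*e)" using pw e0 by (intro mult_right_mono) auto
      moreover have "20/e * (2*e) = 40" using e0 by simp
      ultimately show ?thesis using dlow[OF N2] by linarith
    qed
    then have "r N c \<ge> 42" using bp by simp
    then show ?thesis using ratio_ge[OF N2] N2 unfolding P_def by simp
  qed
  have kkN: "kk c \<le> N" unfolding kk_eq by (rule Least_le) (rule PN)
  have Pkk: "P (kk c)" unfolding kk_eq by (rule LeastI) (rule PN)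
  show "real (kk c) \<le> 3 + ln (20/e) / ln 4"
  proof -
    have "real (kk c) \<le> real N" using kkN by simp
    also have "\<dots> = 2 + of_int \<lceil>x\<rceil>" unfolding N_def using x0 by simp
    also have "\<dots> \<le> 3 + x" by linarith
    finally show ?thesis unfolding x_def .
  qed
  fix dl :: real assume dl: "0 < dl" "4*e \<le> dl" "dl \<le> 1"
  define q where "q = 4 + e + dl"
  have q1: "q > 1" unfolding q_def using e0 dl by simp
  define y where "y = ln (dl/(4*e)) / ln q"
  have y0: "y \<ge> 0" unfolding y_def using q1 dl e0 by (simp add: divide_nonneg_pos)
  define n0 where "n0 = 2 + nat \<lfloor>y\<rfloor>"
  have pq: "q^(n0-2) \<le> dl/(4*e)"
  proof -
    have "q^(n0-2) = q powr (real (nat \<lfloor>y\<rfloor>))" unfolding n0_def using q1 by (simp add: powr_realpow)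
    also have "\<dots> \<le> q powr y" using y0 q1 by (intro powr_mono) auto
    also have "\<dots> = dl/(4*e)" unfolding y_def using q1 dl e0 by (simp add: powr_def exp_ln)
    finally show ?thesis .
  qed
  have notP: "\<not> P j" if j: "j \<le> n0" for j
  proof
    assume Pj: "P j"
    show False
    proof (cases "j = 1")
      case True then show False using Pj ratio1 unfolding P_def by (simp add: numeral_2_eq_2)
    next
      case False
      then have j2: "2 \<le> j" using Pj unfolding P_def by simp
      have "4*e*q^(j-2) \<le> 4*e*q^(n0-2)" using e0 q1 j by (intro mult_left_mono power_increasing) auto
      also have "\<dots> \<le> dl" using pq e0 by (simp add: field_simps)
      finally have hj: "4*e*q^(j-2) \<le> dl" .
      have "r j c - b \<le> 4*(-2-c)*q^(j-2)"
        using d_upper[OF bp(1) _ d2u c2 _ dl(1) dpos j2] bp(3) hj unfolding e_def q_def by simp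
      then have "r j c - b \<le> dl" using hj unfolding e_def by simp
      then have "r j c < 36" using bp e0 dl by simp
      then show False using Pj ratio_le[OF j2] unfolding P_def by simp
    qed
  qed
  have "n0 < kk c" using notP Pkk by (meson not_le_imp_less)
  then have "real n0 + 1 \<le> real (kk c)" by simp
  moreover have "real n0 = 2 + of_int \<lfloor>y\<rfloor>" unfolding n0_def using y0 by simp
  ultimately show "real (kk c) \<ge> 1 + ln (dl/(4*e)) / ln (4 + e + dl)"
    unfolding y_def[symmetric] q_def[symmetric] by linarith
qed

lemma L_tend: "((\<lambda>e::real. (1 + ln((1/ln(1/e))/(4*e))/ln(4+e+1/ln(1/e))) / (ln(1/e)/ln 4)) \<longlongrightarrow> 1) (at_right 0)"
  by real_asymp

lemma U_tend: "((\<lambda>e::real. (3 + ln(20/e)/ln 4) / (ln(1/e)/ln 4)) \<longlongrightarrow> 1) (at_right 0)"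
  by real_asymp

lemma ev1: "eventually (\<lambda>e::real. 4*e \<le> 1/ln(1/e)) (at_right 0)" by real_asymp
lemma ev2: "eventually (\<lambda>e::real. 1/ln(1/e) \<le> 1) (at_right 0)" by real_asymp
lemma ev3: "eventually (\<lambda>e::real. e < 1) (at_right 0)" by real_asymp
lemma ev4: "eventually (\<lambda>e::real. 0 < e) (at_right 0)" by real_asymp

lemma gfl: "filterlim (\<lambda>c::real. -2-c) (at_right 0) (at_left (-2))"
  unfolding filterlim_at
  by (auto simp: eventually_at_filter intro!: tendsto_eq_intros)

theorem lemma1:
  shows "((\<lambda>c. real (kk c) / (ln (1 / \<bar>c + 2\<bar>) / ln 4)) \<longlongrightarrow> 1) (at_left (-2))"
proof (rule tendsto_sandwich)
  define L where "L = (\<lambda>e::real. (1 + ln((1/ln(1/e))/(4*e))/ln(4+e+1/ln(1/e))) / (ln(1/e)/ln 4))"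
  define U where "U = (\<lambda>e::real. (3 + ln(20/e)/ln 4) / (ln(1/e)/ln 4))"
  have ev: "eventually (\<lambda>e::real. 4*e \<le> 1/ln(1/e) \<and> 1/ln(1/e) \<le> 1 \<and> e < 1 \<and> 0 < e) (at_right 0)"
    using ev1 ev2 ev3 ev4 by (auto elim: eventually_elim2 eventually_mono intro: eventually_conj)
  have evc: "eventually (\<lambda>c. 4*(-2-c) \<le> 1/ln(1/(-2-c)) \<and> 1/ln(1/(-2-c)) \<le> 1 \<and> (-2-c) < 1 \<and> 0 < (-2-c)) (at_left (-2::real))"
    using eventually_compose_filterlim[OF ev gfl] .
  show "((\<lambda>c. L (-2-c)) \<longlongrightarrow> 1) (at_left (-2))"
    using filterlim_compose[OF L_tend gfl] unfolding L_def .
  show "((\<lambda>c. U (-2-c)) \<longlongrightarrow> 1) (at_left (-2))"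
    using filterlim_compose[OF U_tend gfl] unfolding U_def .
  show "eventually (\<lambda>c. L (-2-c) \<le> real (kk c) / (ln (1 / \<bar>c + 2\<bar>) / ln 4)) (at_left (-2))"
    using evc
  proof eventually_elim
    case (elim c)
    define e where "e = -2-c"
    have e: "4*e \<le> 1/ln(1/e)" "1/ln(1/e) \<le> 1" "e < 1" "0 < e" using elim unfolding e_def by auto
    have abs: "\<bar>c+2\<bar> = e" using e e_def by simp
    have den: "ln(1/e)/ln 4 > 0" using e by simp
    have dl0: "0 < 1/ln(1/e)" using e by simp
    have "real (kk c) \<ge> 1 + ln ((1/ln(1/e))/(4*e)) / ln (4 + e + 1/ln(1/e))"
      using kk_bounds(2)[of c, OF _ _ dl0] e unfolding e_def by auto
    then show ?case unfolding L_def abs e_def[symmetric] using den by (intro divide_right_mono) auto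
  qed
  show "eventually (\<lambda>c. real (kk c) / (ln (1 / \<bar>c + 2\<bar>) / ln 4) \<le> U (-2-c)) (at_left (-2))"
    using evc
  proof eventually_elim
    case (elim c)
    define e where "e = -2-c"
    have e: "e < 1" "0 < e" using elim unfolding e_def by auto
    have abs: "\<bar>c+2\<bar> = e" using e e_def by simp
    have den: "ln(1/e)/ln 4 > 0" using e by simp
    have "real (kk c) \<le> 3 + ln (20/e) / ln 4"
      using kk_bounds(1)[of c] e unfolding e_def by auto
    then show ?case unfolding U_def abs e_def[symmetric] using den by (intro divide_right_mono) auto
  qed
qed

end
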